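(* Let $(D,\prec,\succ,d)$ be a commutative differential dendriform algebra of weight zero. Define, for $a,b\in D$, $$a\lhd b:=a\prec d(b)\;(=d(b)\succ a),\qquad a\rhd b:=d(b)\prec a\;(=a\succ d(b)).$$ Then $(D,\lhd,\rhd)$ is a pre-Novikov algebra. Moreover, with $a\circ b:=a\lhd b+a\rhd b=a\prec d(b)+d(b)\prec a$, the pair $(D,\circ)$ is a Novikov algebra.
   Context: $\mathbf{k}$ is a commutative unital ring. A dendriform algebra is a $\mathbf{k}$-module $D$ with bilinear operations $\prec,\succ$ such that for all $a,b,c\in D$: $(a\prec b)\prec c=a\prec(b\prec c+b\succ c)$, $(a\succ b)\prec c=a\succ(b\prec c)$, $(a\prec b+a\succ b)\succ c=a\succ(b\succ c)$. It is commutative if $a\succ b=b\prec a$ for all $a,b$. A derivation of weight $\lambda$ on it is a linear map $d$ with $d(a\prec b)=d(a)\prec b+a\prec d(b)+\lambda d(a)\prec d(b)$ and $d(a\succ b)=d(a)\succ b+a\succ d(b)+\lambda d(a)\succ d(b)$ for all $a,b$; then $(D,\prec,\succ,d)$ is a differential dendriform algebra of weight $\lambda$, called commutative if $(D,\prec,\succ)$ is commutative. A pre-Novikov algebra is a $\mathbf{k}$-module $N$ with bilinear operations $\lhd,\rhd$ such that for all $a,b,c\in N$: $(a\lhd b)\lhd c-a\lhd(b\rhd c+b\lhd c)=(b\rhd a)\lhd c-b\rhd(a\lhd c)$; $(a\rhd b+a\lhd b)\rhd c-a\rhd(b\rhd c)=(b\rhd a+b\lhd a)\rhd c-b\rhd(a\rhd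 c)$; $(a\lhd b)\lhd c=(a\lhd c)\lhd b$; $(a\rhd b+a\lhd b)\rhd c=(a\rhd c)\lhd b$. A (left) Novikov algebra is a $\mathbf{k}$-module $N$ with a bilinear operation $\circ$ such that $(a\circ b)\circ c=(a\circ c)\circ b$ and $(a\circ b)\circ c-a\circ(b\circ c)=(b\circ a)\circ c-b\circ(a\circ c)$ for all $a,b,c$. *)

theory Defs
  imports Main
begin

definition is_module :: "('k::comm_ring_1 \<Rightarrow> 'a::ab_group_add \<Rightarrow> 'a) \<Rightarrow> bool" where
  "is_module sm \<longleftrightarrow>
     (\<forall>r x y. sm r (x + y) = sm r x + sm r y) \<and>
     (\<forall>r s x. sm (r + s) x = sm r x + sm s x) \<and>
     (\<forall>r s x. sm (r * s) x = sm r (sm s x)) \<and>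
     (\<forall>x. sm 1 x = x)"

definition is_linear :: "('k::comm_ring_1 \<Rightarrow> 'a::ab_group_add \<Rightarrow> 'a) \<Rightarrow> ('a \<Rightarrow> 'a) \<Rightarrow> bool" where
  "is_linear sm f \<longleftrightarrow> (\<forall>x y. f (x + y) = f x + f y) \<and> (\<forall>r x. f (sm r x) = sm r (f x))"

definition is_bilinear :: "('k::comm_ring_1 \<Rightarrow> 'a::ab_group_add \<Rightarrow> 'a) \<Rightarrow> ('a \<Rightarrow> 'a \<Rightarrow> 'a) \<Rightarrow> bool" where
  "is_bilinear sm m \<longleftrightarrow> (\<forall>x. is_linear sm (m x)) \<and> (\<forall>y. is_linear sm (\<lambda>x. m x y))"

definition dendriform :: "('k::comm_ring_1 \<Rightarrow> 'a::ab_group_add \<Rightarrow> 'a) \<Rightarrow> ('a \<Rightarrow> 'a \<Rightarrow> 'a) \<Rightarrow> ('a \<Rightarrow> 'a \<Rightarrow> 'a) \<Rightarrow> bool" where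
  "dendriform sm pl pr \<longleftrightarrow> is_module sm \<and> is_bilinear sm pl \<and> is_bilinear sm pr \<and>
     (\<forall>a b c. pl (pl a b) c = pl a (pl b c + pr b c)) \<and>
     (\<forall>a b c. pl (pr a b) c = pr a (pl b c)) \<and>
     (\<forall>a b c. pr (pl a b + pr a b) c = pr a (pr b c))"

definition comm_dendriform :: "('k::comm_ring_1 \<Rightarrow> 'a::ab_group_add \<Rightarrow> 'a) \<Rightarrow> ('a \<Rightarrow> 'a \<Rightarrow> 'a) \<Rightarrow> ('a \<Rightarrow> 'a \<Rightarrow> 'a) \<Rightarrow> bool" where
  "comm_dendriform sm pl pr \<longleftrightarrow> dendriform sm pl pr \<and> (\<forall>a b. pr a b = pl b a)"

definition dend_derivation :: "('k::comm_ring_1 \<Rightarrow> 'a::ab_group_add \<Rightarrow> 'a) \<Rightarrow> ('a \<Rightarrow> 'a \<Rightarrow> 'a) \<Rightarrow> ('a \<Rightarrow> 'a \<Rightarrow> 'a) \<Rightarrow> 'k \<Rightarrow> ('a \<Rightarrow> 'a) \<Rightarrow> bool" where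
  "dend_derivation sm pl pr w d \<longleftrightarrow> is_linear sm d \<and>
     (\<forall>a b. d (pl a b) = pl (d a) b + pl a (d b) + sm w (pl (d a) (d b))) \<and>
     (\<forall>a b. d (pr a b) = pr (d a) b + pr a (d b) + sm w (pr (d a) (d b)))"

definition comm_diff_dendriform :: "('k::comm_ring_1 \<Rightarrow> 'a::ab_group_add \<Rightarrow> 'a) \<Rightarrow> ('a \<Rightarrow> 'a \<Rightarrow> 'a) \<Rightarrow> ('a \<Rightarrow> 'a \<Rightarrow> 'a) \<Rightarrow> 'k \<Rightarrow> ('a \<Rightarrow> 'a) \<Rightarrow> bool" where
  "comm_diff_dendriform sm pl pr w d \<longleftrightarrow> comm_dendriform sm pl pr \<and> dend_derivation sm pl pr w d"

definition pre_novikov :: "('k::comm_ring_1 \<Rightarrow> 'a::ab_group_add \<Rightarrow> 'a) \<Rightarrow> ('a \<Rightarrow> 'a \<Rightarrow> 'a) \<Rightarrow> ('a \<Rightarrow> 'a \<Rightarrow> 'a) \<Rightarrow> bool" where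
  "pre_novikov sm l r \<longleftrightarrow> is_module sm \<and> is_bilinear sm l \<and> is_bilinear sm r \<and>
     (\<forall>a b c. l (l a b) c - l a (r b c + l b c) = l (r b a) c - r b (l a c)) \<and>
     (\<forall>a b c. r (r a b + l a b) c - r a (r b c) = r (r b a + l b a) c - r b (r a c)) \<and>
     (\<forall>a b c. l (l a b) c = l (l a c) b) \<and>
     (\<forall>a b c. r (r a b + l a b) c = l (r a c) b)"

definition novikov :: "('k::comm_ring_1 \<Rightarrow> 'a::ab_group_add \<Rightarrow> 'a) \<Rightarrow> ('a \<Rightarrow> 'a \<Rightarrow> 'a) \<Rightarrow> bool" where
  "novikov sm m \<longleftrightarrow> is_module sm \<and> is_bilinear sm m \<and>
     (\<forall>a b c. m (m a b) c = m (m a c) b) \<and>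
     (\<forall>a b c. m (m a b) c - m a (m b c) = m (m b a) c - m b (m a c))"

end

theory Submission
  imports Defs
begin

lemma additive_neg:
  fixes f :: "'a::ab_group_add \<Rightarrow> 'b::ab_group_add"
  assumes "\<And>x y. f (x + y) = f x + f y"
  shows "f (- x) = - f x"
proof -
  have "f 0 = 0" using assms[of 0 0] by simp
  moreover have "f (x + - x) = f x + f (- x)" by (rule assms)
  ultimately show ?thesis by (simp add: eq_neg_iff_add_eq_0 add.commute)
qed

theorem proposition3p15:
  fixes sm :: "'k::comm_ring_1 \<Rightarrow> 'a::ab_group_add \<Rightarrow> 'a"
    and pl pr :: "'a \<Rightarrow> 'a \<Rightarrow> 'a"
    and d :: "'a \<Rightarrow> 'a"
  assumes "comm_diff_dendriform sm pl pr 0 d"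
  shows "pre_novikov sm (\<lambda>a b. pl a (d b)) (\<lambda>a b. pl (d b) a)
         \<and> novikov sm (\<lambda>a b. pl a (d b) + pl (d b) a)"
proof -
  have mod: "is_module sm" and bl: "is_bilinear sm pl" and prc: "\<And>a b. pr a b = pl b a"
    and Z1': "\<And>a b c. pl (pl a b) c = pl a (pl b c + pr b c)"
    and dl: "is_linear sm d"
    and D': "\<And>a b. d (pl a b) = pl (d a) b + pl a (d b) + sm 0 (pl (d a) (d b))"
    using assms unfolding comm_diff_dendriform_def comm_dendriform_def dendriform_def
      dend_derivation_def by blast+
  have sm0: "\<And>x. sm 0 x = 0"
  proof -
    fix x
    have "sm (0+0) x = sm 0 x + sm 0 x" using mod unfolding is_module_def by blast
    thus "sm 0 x = 0" by simp
  qed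
  have Z1: "\<And>a b c. pl (pl a b) c = pl a (pl b c + pl c b)" using Z1' prc by simp
  have D: "\<And>a b. d (pl a b) = pl (d a) b + pl a (d b)" using D' sm0 by simp
  have addR: "\<And>x y z. pl x (y + z) = pl x y + pl x z"
    and addL: "\<And>x y z. pl (y + z) x = pl y x + pl z x"
    and smR: "\<And>x r y. pl x (sm r y) = sm r (pl x y)"
    and smL: "\<And>x r y. pl (sm r y) x = sm r (pl y x)"
    using bl unfolding is_bilinear_def is_linear_def by blast+
  have dadd: "\<And>x y. d (x + y) = d x + d y" and dsm: "\<And>r x. d (sm r x) = sm r (d x)"
    using dl unfolding is_linear_def by blast+
  have smadd: "\<And>r x y. sm r (x + y) = sm r x + sm r y"
    using mod unfolding is_module_def by blast
  have negR: "\<And>x y. pl x (- y) = - pl x y"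
    by (rule additive_neg) (rule addR)
  have negL: "\<And>x y. pl (- y) x = - pl y x"
    by (rule additive_neg[where f="\<lambda>y. pl y x" for x]) (rule addL)
  have dneg: "\<And>x. d (- x) = - d x" by (rule additive_neg) (rule dadd)
  have subR: "\<And>x y z. pl x (y - z) = pl x y - pl x z" by (simp only: diff_conv_add_uminus addR negR)
  have subL: "\<And>x y z. pl (y - z) x = pl y x - pl z x" by (simp only: diff_conv_add_uminus addL negL)
  have dsub: "\<And>x y. d (x - y) = d x - d y" by (simp only: diff_conv_add_uminus dadd dneg)
  note R = Z1 D addR addL negR negL dneg dadd subR subL dsub
  have lin1: "is_bilinear sm (\<lambda>a b. pl a (d b))"
    unfolding is_bilinear_def is_linear_def by (simp add: addR addL smR smL dadd dsm)
  have lin2: "is_bilinear sm (\<lambda>a b. pl (d b) a)"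
    unfolding is_bilinear_def is_linear_def by (simp add: addR addL smR smL dadd dsm)
  have lin3: "is_bilinear sm (\<lambda>a b. pl a (d b) + pl (d b) a)"
    unfolding is_bilinear_def is_linear_def by (simp add: addR addL smR smL dadd dsm smadd add_ac)
  have i1: "\<And>a b c. pl (pl a (d b)) (d c) - pl a (d (pl (d c) b + pl b (d c))) = pl (pl (d a) b) (d c) - pl (d (pl a (d c))) b"
    by (simp add: R add_ac)
  have i2: "\<And>a b c. pl (d c) (pl (d b) a + pl a (d b)) - pl (d (pl (d c) b)) a = pl (d c) (pl (d a) b + pl b (d a)) - pl (d (pl (d c) a)) b"
    by (simp add: R add_ac)
  have i3: "\<And>a b c. pl (pl a (d b)) (d c) = pl (pl a (d c)) (d b)"
    by (simp add: R add_ac)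
  have i4: "\<And>a b c. pl (d c) (pl (d b) a + pl a (d b)) = pl (pl (d c) a) (d b)"
    by (simp add: R add_ac)
  have "pre_novikov sm (\<lambda>a b. pl a (d b)) (\<lambda>a b. pl (d b) a)"
    unfolding pre_novikov_def using mod lin1 lin2 i1 i2 i3 i4 by simp
  moreover have "novikov sm (\<lambda>a b. pl a (d b) + pl (d b) a)"
    unfolding novikov_def using mod lin3
    by (simp add: R add_ac)
  ultimately show ?thesis by blast
qed

end
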